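(* Let $\Sigma=(X,\mathcal{U},\phi)$ be an ordered control system which is monotone with respect to inputs and satisfies $\mathcal{U}(x)=\mathcal{U}$ for all $x\in X$. Let $\mathcal{U}_c\subseteq\mathcal{U}$, and assume: (i) there exists $\rho\in\mathcal{K}_\infty$ such that for all $x_-,x,x_+\in X$ with $x_-\le x\le x_+$ one has $\|x\|_X\le\rho(\|x_-\|_X+\|x_+\|_X)$; (ii) there exists $\eta\in\mathcal{K}_\infty$ such that for every $u\in\mathcal{U}$ there exist $u_-,u_+\in\mathcal{U}_c$ with $u_-\le u\le u_+$, $\|u_-\|_{\mathcal{U}}\le\eta(\|u\|_{\mathcal{U}})$ and $\|u_+\|_{\mathcal{U}}\le\eta(\|u\|_{\mathcal{U}})$. Then $\Sigma$ is ISS if and only if $\Sigma$ is ISS with respect to inputs in $\mathcal{U}_c$. Moreover, if $\rho$ is linear, then $\Sigma$ is exp-ISS if and only if $\Sigma$ is exp-ISS with respect to inputs in $\mathcal{U}_c$; and if in addition $\Sigma$ is exp-ISS with respect to inputs in $\mathcal{U}_c$ with a linear gain function and $\eta$ is linear, then $\Sigma$ is exp-ISS with a linear gain function.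
   Context: Comparison functions: $\mathcal{K}$ is the set of continuous strictly increasing $\gamma:\mathbb{R}_+\to\mathbb{R}_+$ with $\gamma(0)=0$; $\mathcal{K}_\infty$ the unbounded functions in $\mathcal{K}$; $\mathcal{L}$ the continuous decreasing $\gamma:\mathbb{R}_+\to\mathbb{R}_+$ with $\gamma(t)\to0$; $\mathcal{KL}$ the functions $\beta:\mathbb{R}_+^2\to\mathbb{R}_+$ with $\beta(\cdot,t)\in\mathcal{K}$ for all $t\ge0$ and $\beta(r,\cdot)\in\mathcal{L}$ for all $r>0$. A control system $\Sigma=(X,\mathcal{U},\phi)$ consists of a normed linear space $X$ (state space), a set $U$ of input values (nonempty subset of a normed linear space), a normed linear space $\mathcal{U}$ of functions $\mathbb{R}_+\to U$ closed under time shifts $u\mapsto u(\cdot+\tau)$, nonempty sets $\mathcal{U}(x)\subseteq\mathcal{U}$ of admissible inputs for each $x\in X$, and a map $\phi$ such that for every $x\in X$, $u\in\mathcal{U}(x)$ and $t\ge0$ the state $\phi(t,x,u)\in X$ is defined, $\phi(0,x,u)=x$, $\phi(t,x,u)=\phi(t,x,\tilde u)$ whenever $\tilde u\in\mathcal{U}(x)$ agrees with $u$ on $[0,t]$, and $u(t+\cdot)\in\mathcal{U}(\phi(t,x,u))$ with $\phi(h,\phi(t,x,u),u(t+\cdot))=\phi(t+h,x,u)$ for all $t,h\ge0$. A positive cone in a normed linear space $X$ is a set $K$ with $K\cap(-K)=\{0\}$, $ax\in K$ and $x+y\in K$ for all $a\ge0$, $x,y\in K$; it induces the order $x\le y\iff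 y-x\in K$. The system is ordered if $X$ and $\mathcal{U}$ carry such orders. It is monotone with respect to inputs if for all $t\ge0$, $x\in X$ and $u_1,u_2\in\mathcal{U}(x)$ with $u_1\le u_2$ one has $\phi(t,x,u_1)\le\phi(t,x,u_2)$. For $\mathcal{U}_c\subseteq\mathcal{U}$, $\Sigma$ is ISS with respect to inputs in $\mathcal{U}_c$ if there exist $\beta\in\mathcal{KL}$, $\gamma\in\mathcal{K}$ such that $\|\phi(t,x,u)\|_X\le\beta(\|x\|_X,t)+\gamma(\|u\|_{\mathcal{U}})$ for all $t\ge0$, all $x\in X$ and all $u\in\mathcal{U}(x)\cap\mathcal{U}_c$; ISS means ISS w.r.t. inputs in $\mathcal{U}$. $\Sigma$ is exp-ISS w.r.t. inputs in $\mathcal{U}_c$ if there exist constants $M,a>0$ and $\gamma\in\mathcal{K}_\infty$ with $\|\phi(t,x,u)\|_X\le Me^{-at}\|x\|_X+\gamma(\|u\|_{\mathcal{U}})$ for the same range of $t,x,u$; exp-ISS means exp-ISS w.r.t. inputs in $\mathcal{U}$; "with a linear gain function" means $\gamma$ can be chosen linear. *)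

theory Defs
  imports "HOL-Analysis.Analysis"
begin

definition class_K :: "(real \<Rightarrow> real) \<Rightarrow> bool" where
  "class_K \<gamma> \<longleftrightarrow> continuous_on {0..} \<gamma> \<and> strict_mono_on {0..} \<gamma> \<and> \<gamma> 0 = 0
      \<and> (\<forall>r\<ge>0. \<gamma> r \<ge> 0)"

definition class_Kinf :: "(real \<Rightarrow> real) \<Rightarrow> bool" where
  "class_Kinf \<gamma> \<longleftrightarrow> class_K \<gamma> \<and> \<not> bdd_above (\<gamma> ` {0..})"

definition class_L :: "(real \<Rightarrow> real) \<Rightarrow> bool" where
  "class_L \<gamma> \<longleftrightarrow> continuous_on {0..} \<gamma> \<and> antimono_on {0..} \<gamma>
      \<and> (\<forall>t\<ge>0. \<gamma> t \<ge> 0) \<and> (\<gamma> \<longlongrightarrow> 0) at_top"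

definition class_KL :: "(real \<Rightarrow> real \<Rightarrow> real) \<Rightarrow> bool" where
  "class_KL \<beta> \<longleftrightarrow> (\<forall>t\<ge>0. class_K (\<lambda>r. \<beta> r t)) \<and> (\<forall>r>0. class_L (\<lambda>t. \<beta> r t))"

text \<open>Inputs are functions R+ -> U, represented as functions real => 'v which are
  normalised to 0 at negative times. Time shift u(. + tau):\<close>

definition shift :: "real \<Rightarrow> (real \<Rightarrow> 'v::zero) \<Rightarrow> real \<Rightarrow> 'v" where
  "shift \<tau> u = (\<lambda>s. if 0 \<le> s then u (s + \<tau>) else 0)"

definition input_space ::
  "'v::real_normed_vector set \<Rightarrow> (real \<Rightarrow> 'v) set \<Rightarrow> ((real \<Rightarrow> 'v) \<Rightarrow> real) \<Rightarrow> bool" where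
  "input_space Uval Ucal normU \<longleftrightarrow>
     Uval \<noteq> {} \<and>
     (\<forall>u\<in>Ucal. (\<forall>t\<ge>0. u t \<in> Uval) \<and> (\<forall>t<0. u t = 0)) \<and>
     (\<lambda>t. 0) \<in> Ucal \<and>
     (\<forall>u\<in>Ucal. \<forall>v\<in>Ucal. (\<lambda>t. u t + v t) \<in> Ucal) \<and>
     (\<forall>u\<in>Ucal. \<forall>a::real. (\<lambda>t. a *\<^sub>R u t) \<in> Ucal) \<and>
     (\<forall>u\<in>Ucal. normU u \<ge> 0 \<and> (normU u = 0 \<longleftrightarrow> u = (\<lambda>t. 0))) \<and>
     (\<forall>u\<in>Ucal. \<forall>a::real. normU (\<lambda>t. a *\<^sub>R u t) = \<bar>a\<bar> * normU u) \<and>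
     (\<forall>u\<in>Ucal. \<forall>v\<in>Ucal. normU (\<lambda>t. u t + v t) \<le> normU u + normU v) \<and>
     (\<forall>u\<in>Ucal. \<forall>\<tau>\<ge>0. shift \<tau> u \<in> Ucal)"

definition control_system ::
  "'v::real_normed_vector set \<Rightarrow> (real \<Rightarrow> 'v) set \<Rightarrow> ((real \<Rightarrow> 'v) \<Rightarrow> real)
   \<Rightarrow> ('x::real_normed_vector \<Rightarrow> (real \<Rightarrow> 'v) set)
   \<Rightarrow> (real \<Rightarrow> 'x \<Rightarrow> (real \<Rightarrow> 'v) \<Rightarrow> 'x) \<Rightarrow> bool" where
  "control_system Uval Ucal normU Uadm \<phi> \<longleftrightarrow>
     input_space Uval Ucal normU \<and>
     (\<forall>x. Uadm x \<noteq> {} \<and> Uadm x \<subseteq> Ucal) \<and>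
     (\<forall>x. \<forall>u\<in>Uadm x. \<phi> 0 x u = x) \<and>
     (\<forall>x. \<forall>u\<in>Uadm x. \<forall>v\<in>Uadm x. \<forall>t\<ge>0.
        (\<forall>s\<in>{0..t}. u s = v s) \<longrightarrow> \<phi> t x u = \<phi> t x v) \<and>
     (\<forall>x. \<forall>u\<in>Uadm x. \<forall>t\<ge>0. shift t u \<in> Uadm (\<phi> t x u) \<and>
        (\<forall>h\<ge>0. \<phi> h (\<phi> t x u) (shift t u) = \<phi> (t + h) x u))"

definition pos_cone :: "'a::real_vector set \<Rightarrow> bool" where
  "pos_cone K \<longleftrightarrow> K \<inter> uminus ` K = {0} \<and>
     (\<forall>a\<ge>0. \<forall>x\<in>K. a *\<^sub>R x \<in> K) \<and> (\<forall>x\<in>K. \<forall>y\<in>K. x + y \<in> K)"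

definition leK :: "'a::real_vector set \<Rightarrow> 'a \<Rightarrow> 'a \<Rightarrow> bool" where
  "leK K x y \<longleftrightarrow> y - x \<in> K"

definition input_cone :: "(real \<Rightarrow> 'v::real_vector) set \<Rightarrow> (real \<Rightarrow> 'v) set \<Rightarrow> bool" where
  "input_cone Ucal K \<longleftrightarrow> K \<subseteq> Ucal \<and>
     K \<inter> (\<lambda>u t. - u t) ` K = {\<lambda>t. 0} \<and>
     (\<forall>a\<ge>0. \<forall>u\<in>K. (\<lambda>t. a *\<^sub>R u t) \<in> K) \<and> (\<forall>u\<in>K. \<forall>v\<in>K. (\<lambda>t. u t + v t) \<in> K)"

definition leU :: "(real \<Rightarrow> 'v::real_vector) set \<Rightarrow> (real \<Rightarrow> 'v) \<Rightarrow> (real \<Rightarrow> 'v) \<Rightarrow> bool" where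
  "leU K u v \<longleftrightarrow> (\<lambda>t. v t - u t) \<in> K"

definition monotone_inputs where
  "monotone_inputs KX KU Uadm \<phi> \<longleftrightarrow>
     (\<forall>t\<ge>0. \<forall>x. \<forall>u1\<in>Uadm x. \<forall>u2\<in>Uadm x. leU KU u1 u2 \<longrightarrow> leK KX (\<phi> t x u1) (\<phi> t x u2))"

definition ISS_wrt ::
  "((real \<Rightarrow> 'v) \<Rightarrow> real) \<Rightarrow> ('x::real_normed_vector \<Rightarrow> (real \<Rightarrow> 'v) set)
   \<Rightarrow> (real \<Rightarrow> 'x \<Rightarrow> (real \<Rightarrow> 'v) \<Rightarrow> 'x) \<Rightarrow> (real \<Rightarrow> 'v) set \<Rightarrow> bool" where
  "ISS_wrt normU Uadm \<phi> Uc \<longleftrightarrow> (\<exists>\<beta> \<gamma>. class_KL \<beta> \<and> class_K \<gamma> \<and>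
     (\<forall>t\<ge>0. \<forall>x. \<forall>u\<in>Uadm x \<inter> Uc. norm (\<phi> t x u) \<le> \<beta> (norm x) t + \<gamma> (normU u)))"

definition expISS_wrt ::
  "((real \<Rightarrow> 'v) \<Rightarrow> real) \<Rightarrow> ('x::real_normed_vector \<Rightarrow> (real \<Rightarrow> 'v) set)
   \<Rightarrow> (real \<Rightarrow> 'x \<Rightarrow> (real \<Rightarrow> 'v) \<Rightarrow> 'x) \<Rightarrow> (real \<Rightarrow> 'v) set \<Rightarrow> bool" where
  "expISS_wrt normU Uadm \<phi> Uc \<longleftrightarrow> (\<exists>M a \<gamma>. M > 0 \<and> a > 0 \<and> class_Kinf \<gamma> \<and>
     (\<forall>t\<ge>0. \<forall>x. \<forall>u\<in>Uadm x \<inter> Uc.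
        norm (\<phi> t x u) \<le> M * exp (- a * t) * norm x + \<gamma> (normU u)))"

text \<open>exp-ISS with a linear gain function gamma(r) = g * r (gamma in K-infinity forces g > 0).\<close>

definition expISS_lin_wrt ::
  "((real \<Rightarrow> 'v) \<Rightarrow> real) \<Rightarrow> ('x::real_normed_vector \<Rightarrow> (real \<Rightarrow> 'v) set)
   \<Rightarrow> (real \<Rightarrow> 'x \<Rightarrow> (real \<Rightarrow> 'v) \<Rightarrow> 'x) \<Rightarrow> (real \<Rightarrow> 'v) set \<Rightarrow> bool" where
  "expISS_lin_wrt normU Uadm \<phi> Uc \<longleftrightarrow> (\<exists>M a g. M > 0 \<and> a > 0 \<and> g > 0 \<and>
     (\<forall>t\<ge>0. \<forall>x. \<forall>u\<in>Uadm x \<inter> Uc.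
        norm (\<phi> t x u) \<le> M * exp (- a * t) * norm x + g * normU u))"

definition linear_on_Rplus :: "(real \<Rightarrow> real) \<Rightarrow> bool" where
  "linear_on_Rplus f \<longleftrightarrow> (\<exists>c. \<forall>r\<ge>0. f r = c * r)"

end

theory Submission
  imports Defs
begin

lemma K_mono: "class_K f \<Longrightarrow> 0 \<le> a \<Longrightarrow> a \<le> b \<Longrightarrow> f a \<le> f b"
  unfolding class_K_def strict_mono_on_def
  by (metis atLeast_iff order_le_less order_trans)

lemma K_nonneg: "class_K f \<Longrightarrow> 0 \<le> a \<Longrightarrow> 0 \<le> f a"
  unfolding class_K_def by blast

lemma K_comp:
  assumes f: "class_K f" and g: "class_K g"
  shows "class_K (\<lambda>r. f (g r))"
proof -
  have gi: "g ` {0..} \<subseteq> {0..}" using g unfolding class_K_def by auto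
  have c: "continuous_on {0..} (\<lambda>r. f (g r))"
  proof -
    have "continuous_on {0..} f" "continuous_on {0..} g" using f g unfolding class_K_def by auto
    then show ?thesis using continuous_on_compose2[of "{0..}" f "{0..}" g] gi by blast
  qed
  have s: "strict_mono_on {0..} (\<lambda>r. f (g r))"
    using f g unfolding class_K_def strict_mono_on_def by auto
  show ?thesis using c s f g unfolding class_K_def by auto
qed

lemma K_lin: "c > 0 \<Longrightarrow> class_K (\<lambda>r. c * r)"
  unfolding class_K_def strict_mono_on_def
  by (auto intro!: continuous_intros)

lemma K_scale: "c > 0 \<Longrightarrow> class_K f \<Longrightarrow> class_K (\<lambda>r. c * f r)"
  using K_comp[OF K_lin[of c], of f] by simp

lemma Kinf_unb: assumes "class_Kinf f" shows "\<exists>r\<ge>0. f r > B"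
proof (rule ccontr)
  assume "\<not> ?thesis"
  then have "\<forall>y\<in>f ` {0..}. y \<le> B" by auto
  then show False using assms unfolding class_Kinf_def bdd_above_def by auto
qed

lemma Kinf_intro:
  assumes "class_K f" "\<And>B. \<exists>r\<ge>0. f r > B"
  shows "class_Kinf f"
  unfolding class_Kinf_def bdd_above_def
  using assms by (metis atLeast_iff image_eqI not_le)

lemma Kinf_comp:
  assumes f: "class_Kinf f" and g: "class_Kinf g"
  shows "class_Kinf (\<lambda>r. f (g r))"
proof (rule Kinf_intro)
  have "class_K f" "class_K g" using f g unfolding class_Kinf_def by auto
  then show "class_K (\<lambda>r. f (g r))" by (rule K_comp)
  fix B
  obtain s where s: "s \<ge> 0" "f s > B" using Kinf_unb[OF f] by blast
  obtain r where r: "r \<ge> 0" "g r > s" using Kinf_unb[OF g] by blast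
  have "f s \<le> f (g r)" using K_mono[of f s "g r"] f s r unfolding class_Kinf_def by auto
  then show "\<exists>r\<ge>0. f (g r) > B" using r s by (intro exI[of _ r]) auto
qed

lemma Kinf_scale:
  assumes "c > 0" "class_Kinf f" shows "class_Kinf (\<lambda>r. c * f r)"
proof (rule Kinf_intro)
  have "class_K f" using assms unfolding class_Kinf_def by auto
  then show "class_K (\<lambda>r. c * f r)" using assms(1) by (intro K_scale)
  fix B
  obtain r where "r \<ge> 0" "f r > B / c" using Kinf_unb[OF assms(2)] by blast
  then show "\<exists>r\<ge>0. c * f r > B" using assms(1)
    by (intro exI[of _ r]) (auto simp: field_simps)
qed

lemma KL_comp:
  assumes f: "class_K f" and b: "class_KL \<beta>"
  shows "class_KL (\<lambda>r t. f (\<beta> r t))"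
  unfolding class_KL_def
proof safe
  fix t :: real assume "t \<ge> 0"
  then show "class_K (\<lambda>r. f (\<beta> r t))" using b f K_comp unfolding class_KL_def by blast
next
  fix r :: real assume r: "r > 0"
  have L: "class_L (\<lambda>t. \<beta> r t)" using b r unfolding class_KL_def by blast
  have gi: "(\<lambda>t. \<beta> r t) ` {0..} \<subseteq> {0..}" using L unfolding class_L_def by auto
  have c: "continuous_on {0..} (\<lambda>t. f (\<beta> r t))"
  proof -
    have "continuous_on {0..} f" "continuous_on {0..} (\<lambda>t. \<beta> r t)" using f L unfolding class_K_def class_L_def by auto
    then show ?thesis using continuous_on_compose2[of "{0..}" f "{0..}" "\<lambda>t. \<beta> r t"] gi by blast
  qed
  have a: "antimono_on {0..} (\<lambda>t. f (\<beta> r t))"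
    using L f unfolding class_L_def monotone_on_def
    by (auto intro!: K_mono[OF f])
  have nn: "\<forall>t\<ge>0. f (\<beta> r t) \<ge> 0" using L f K_nonneg unfolding class_L_def by blast
  have lim: "((\<lambda>t. \<beta> r t) \<longlongrightarrow> 0) at_top" using L unfolding class_L_def by blast
  have ev: "\<forall>\<^sub>F t in at_top. \<beta> r t \<in> {0..}"
    using L unfolding class_L_def eventually_at_top_linorder by auto
  have fc: "continuous_on {0..} f" and f0: "f 0 = 0" using f unfolding class_K_def by auto
  have "((\<lambda>t. f (\<beta> r t)) \<longlongrightarrow> f 0) at_top"
    using continuous_on_tendsto_compose[OF fc lim _ ev] by simp
  then have "((\<lambda>t. f (\<beta> r t)) \<longlongrightarrow> 0) at_top" unfolding f0 .
  then show "class_L (\<lambda>t. f (\<beta> r t))" using c a nn unfolding class_L_def by blast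
qed

theorem mainTheorem1:
  fixes Uval :: "'v::real_normed_vector set"
    and Ucal Uc KU :: "(real \<Rightarrow> 'v) set"
    and normU :: "(real \<Rightarrow> 'v) \<Rightarrow> real"
    and Uadm :: "'x::real_normed_vector \<Rightarrow> (real \<Rightarrow> 'v) set"
    and \<phi> :: "real \<Rightarrow> 'x \<Rightarrow> (real \<Rightarrow> 'v) \<Rightarrow> 'x"
    and KX :: "'x set"
    and \<rho> \<eta> :: "real \<Rightarrow> real"
  assumes sys: "control_system Uval Ucal normU Uadm \<phi>"
    and coneX: "pos_cone KX"
    and coneU: "input_cone Ucal KU"
    and mono: "monotone_inputs KX KU Uadm \<phi>"
    and adm: "\<forall>x. Uadm x = Ucal"
    and Uc: "Uc \<subseteq> Ucal"
    and rho: "class_Kinf \<rho>"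
    and i: "\<forall>xm x xp. leK KX xm x \<and> leK KX x xp \<longrightarrow> norm x \<le> \<rho> (norm xm + norm xp)"
    and eta: "class_Kinf \<eta>"
    and ii: "\<forall>u\<in>Ucal. \<exists>um\<in>Uc. \<exists>up\<in>Uc. leU KU um u \<and> leU KU u up \<and>
               normU um \<le> \<eta> (normU u) \<and> normU up \<le> \<eta> (normU u)"
  shows "(ISS_wrt normU Uadm \<phi> Ucal \<longleftrightarrow> ISS_wrt normU Uadm \<phi> Uc) \<and>
         (linear_on_Rplus \<rho> \<longrightarrow>
            (expISS_wrt normU Uadm \<phi> Ucal \<longleftrightarrow> expISS_wrt normU Uadm \<phi> Uc) \<and>
            (expISS_lin_wrt normU Uadm \<phi> Uc \<and> linear_on_Rplus \<eta> \<longrightarrow>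
               expISS_lin_wrt normU Uadm \<phi> Ucal))"
proof -
  have rK: "class_K \<rho>" and eK: "class_K \<eta>" using rho eta unfolding class_Kinf_def by auto
  have nU: "\<And>u. u \<in> Ucal \<Longrightarrow> normU u \<ge> 0"
  proof -
    fix u assume "u \<in> Ucal"
    moreover have "input_space Uval Ucal normU" using sys unfolding control_system_def by (elim conjE)
    then have "\<forall>u\<in>Ucal. normU u \<ge> 0 \<and> (normU u = 0 \<longleftrightarrow> u = (\<lambda>t. 0))"
      unfolding input_space_def by (elim conjE) assumption
    ultimately show "normU u \<ge> 0" by blast
  qed
  have core: "\<And>(t::real) x u. t \<ge> 0 \<Longrightarrow> u \<in> Ucal \<Longrightarrow> \<exists>um\<in>Uc. \<exists>up\<in>Uc.
      normU um \<le> \<eta> (normU u) \<and> normU up \<le> \<eta> (normU u) \<and>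
      norm (\<phi> t x u) \<le> \<rho> (norm (\<phi> t x um) + norm (\<phi> t x up))"
  proof -
    fix t :: real and x u assume t: "t \<ge> 0" and u: "u \<in> Ucal"
    obtain um up where um: "um \<in> Uc" and up: "up \<in> Uc" and h: "leU KU um u" "leU KU u up"
      "normU um \<le> \<eta> (normU u)" "normU up \<le> \<eta> (normU u)" using ii u by blast
    have mm: "\<forall>u1\<in>Uadm x. \<forall>u2\<in>Uadm x. leU KU u1 u2 \<longrightarrow> leK KX (\<phi> t x u1) (\<phi> t x u2)"
      using mono t unfolding monotone_inputs_def by blast
    have ux: "Uadm x = Ucal" using adm by blast
    have umc: "um \<in> Ucal" "up \<in> Ucal" using um up Uc by auto
    have "leK KX (\<phi> t x um) (\<phi> t x u)" using mm umc u h(1) unfolding ux by blast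
    moreover have "leK KX (\<phi> t x u) (\<phi> t x up)" using mm umc u h(2) unfolding ux by blast
    ultimately have "norm (\<phi> t x u) \<le> \<rho> (norm (\<phi> t x um) + norm (\<phi> t x up))" using i by blast
    then show "\<exists>um\<in>Uc. \<exists>up\<in>Uc.
      normU um \<le> \<eta> (normU u) \<and> normU up \<le> \<eta> (normU u) \<and>
      norm (\<phi> t x u) \<le> \<rho> (norm (\<phi> t x um) + norm (\<phi> t x up))" using um up h by blast
  qed
  have ISS: "ISS_wrt normU Uadm \<phi> Uc \<Longrightarrow> ISS_wrt normU Uadm \<phi> Ucal"
  proof -
    assume "ISS_wrt normU Uadm \<phi> Uc"
    then obtain \<beta> \<gamma> where b: "class_KL \<beta>" and g: "class_K \<gamma>" and
      est: "\<forall>t\<ge>0. \<forall>x. \<forall>u\<in>Uadm x \<inter> Uc. norm (\<phi> t x u) \<le> \<beta> (norm x) t + \<gamma> (normU u)"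
      unfolding ISS_wrt_def by blast
    have f4: "class_K (\<lambda>s. \<rho> (4 * s))" using K_comp[OF rK K_lin[of 4]] by simp
    have b': "class_KL (\<lambda>r t. \<rho> (4 * \<beta> r t))" using KL_comp[OF f4 b] by simp
    have g': "class_K (\<lambda>s. \<rho> (4 * \<gamma> (\<eta> s)))" using K_comp[OF f4 K_comp[OF g eK]] by simp
    have "\<forall>t\<ge>0. \<forall>x. \<forall>u\<in>Uadm x \<inter> Ucal. norm (\<phi> t x u) \<le> \<rho> (4 * \<beta> (norm x) t) + \<rho> (4 * \<gamma> (\<eta> (normU u)))"
    proof (intro allI impI ballI)
      fix t :: real and x u assume t: "t \<ge> 0" and "u \<in> Uadm x \<inter> Ucal"
      then have u: "u \<in> Ucal" by auto
      obtain um up where um: "um \<in> Uc" and up: "up \<in> Uc" and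
        h: "normU um \<le> \<eta> (normU u)" "normU up \<le> \<eta> (normU u)"
           "norm (\<phi> t x u) \<le> \<rho> (norm (\<phi> t x um) + norm (\<phi> t x up))"
        using core[OF t u] by blast
      have "class_K (\<lambda>r. \<beta> r t)" using b t unfolding class_KL_def by auto
      then have bx: "\<beta> (norm x) t \<ge> 0" using K_nonneg[of "\<lambda>r. \<beta> r t" "norm x"] by simp
      have gm: "\<gamma> (normU um) \<le> \<gamma> (\<eta> (normU u))"
        using K_mono[OF g] nU um h Uc by auto
      have gp: "\<gamma> (normU up) \<le> \<gamma> (\<eta> (normU u))"
        using K_mono[OF g] nU up h Uc by auto
      have gn: "\<gamma> (\<eta> (normU u)) \<ge> 0" using K_nonneg[OF g] K_nonneg[OF eK] nU u by auto
      have "norm (\<phi> t x um) \<le> \<beta> (norm x) t + \<gamma> (normU um)"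
           "norm (\<phi> t x up) \<le> \<beta> (norm x) t + \<gamma> (normU up)"
        using est t um up Uc adm by auto
      then have s: "norm (\<phi> t x um) + norm (\<phi> t x up) \<le> 2 * \<beta> (norm x) t + 2 * \<gamma> (\<eta> (normU u))"
        using gm gp by linarith
      have "\<rho> (norm (\<phi> t x um) + norm (\<phi> t x up)) \<le> \<rho> (2 * \<beta> (norm x) t + 2 * \<gamma> (\<eta> (normU u)))"
        using K_mono[OF rK _ s] by simp
      also have "\<dots> \<le> \<rho> (4 * \<beta> (norm x) t) + \<rho> (4 * \<gamma> (\<eta> (normU u)))"
      proof (cases "\<beta> (norm x) t \<le> \<gamma> (\<eta> (normU u))")
        case True
        then have "\<rho> (2 * \<beta> (norm x) t + 2 * \<gamma> (\<eta> (normU u))) \<le> \<rho> (4 * \<gamma> (\<eta> (normU u)))"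
          using K_mono[OF rK] bx gn by auto
        moreover have "\<rho> (4 * \<beta> (norm x) t) \<ge> 0" using K_nonneg[OF rK] bx by auto
        ultimately show ?thesis by linarith
      next
        case False
        then have "\<rho> (2 * \<beta> (norm x) t + 2 * \<gamma> (\<eta> (normU u))) \<le> \<rho> (4 * \<beta> (norm x) t)"
          using K_mono[OF rK] bx gn by auto
        moreover have "\<rho> (4 * \<gamma> (\<eta> (normU u))) \<ge> 0" using K_nonneg[OF rK] gn by auto
        ultimately show ?thesis by linarith
      qed
      finally show "norm (\<phi> t x u) \<le> \<rho> (4 * \<beta> (norm x) t) + \<rho> (4 * \<gamma> (\<eta> (normU u)))"
        using h by linarith
    qed
    then show ?thesis unfolding ISS_wrt_def using b' g' by blast
  qed
  have sub: "\<And>x. Uadm x \<inter> Uc \<subseteq> Uadm x \<inter> Ucal" using Uc by blast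
  have ISS2: "ISS_wrt normU Uadm \<phi> Ucal \<Longrightarrow> ISS_wrt normU Uadm \<phi> Uc"
  proof -
    assume "ISS_wrt normU Uadm \<phi> Ucal"
    then obtain \<beta> \<gamma> where b: "class_KL \<beta> \<and> class_K \<gamma>" and
      e: "\<forall>t\<ge>0. \<forall>x. \<forall>u\<in>Uadm x \<inter> Ucal. norm (\<phi> t x u) \<le> \<beta> (norm x) t + \<gamma> (normU u)"
      unfolding ISS_wrt_def by blast
    have "\<forall>t\<ge>0. \<forall>x. \<forall>u\<in>Uadm x \<inter> Uc. norm (\<phi> t x u) \<le> \<beta> (norm x) t + \<gamma> (normU u)"
    proof (intro allI impI ballI)
      fix t :: real and x u assume "t \<ge> 0" "u \<in> Uadm x \<inter> Uc"
      then show "norm (\<phi> t x u) \<le> \<beta> (norm x) t + \<gamma> (normU u)" using e sub[of x] by blast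
    qed
    then show ?thesis unfolding ISS_wrt_def using b by blast
  qed
  have E2: "expISS_wrt normU Uadm \<phi> Ucal \<Longrightarrow> expISS_wrt normU Uadm \<phi> Uc"
  proof -
    assume "expISS_wrt normU Uadm \<phi> Ucal"
    then obtain M a \<gamma> where b: "M > 0 \<and> a > 0 \<and> class_Kinf \<gamma>" and
      e: "\<forall>t\<ge>0. \<forall>x. \<forall>u\<in>Uadm x \<inter> Ucal. norm (\<phi> t x u) \<le> M * exp (- a * t) * norm x + \<gamma> (normU u)"
      unfolding expISS_wrt_def by blast
    have "\<forall>t\<ge>0. \<forall>x. \<forall>u\<in>Uadm x \<inter> Uc. norm (\<phi> t x u) \<le> M * exp (- a * t) * norm x + \<gamma> (normU u)"
    proof (intro allI impI ballI)
      fix t :: real and x u assume "t \<ge> 0" "u \<in> Uadm x \<inter> Uc"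
      then show "norm (\<phi> t x u) \<le> M * exp (- a * t) * norm x + \<gamma> (normU u)" using e sub[of x] by blast
    qed
    then show ?thesis unfolding expISS_wrt_def using b by blast
  qed
  have LIN: "linear_on_Rplus \<rho> \<Longrightarrow>
      (expISS_wrt normU Uadm \<phi> Uc \<longrightarrow> expISS_wrt normU Uadm \<phi> Ucal) \<and>
      (expISS_lin_wrt normU Uadm \<phi> Uc \<and> linear_on_Rplus \<eta> \<longrightarrow> expISS_lin_wrt normU Uadm \<phi> Ucal)"
  proof -
    assume "linear_on_Rplus \<rho>"
    then obtain c where c: "\<forall>r\<ge>0. \<rho> r = c * r" unfolding linear_on_Rplus_def by blast
    have cpos: "c > 0"
    proof -
      have sm: "strict_mono_on {0..} \<rho>" using rK unfolding class_K_def by auto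
        have "\<rho> 0 < \<rho> 1" using strict_mono_onD[OF sm, of 0 1] by auto
      then show ?thesis using c rK unfolding class_K_def by auto
    qed
    have gen: "\<And>M a G. M > 0 \<Longrightarrow> a > 0 \<Longrightarrow> (\<forall>s\<ge>0. G s \<ge> 0) \<Longrightarrow> (\<forall>s s'. 0 \<le> s \<longrightarrow> s \<le> s' \<longrightarrow> G s \<le> G s') \<Longrightarrow>
        (\<forall>t\<ge>0. \<forall>x. \<forall>u\<in>Uadm x \<inter> Uc. norm (\<phi> t x u) \<le> M * exp (- a * t) * norm x + G (normU u)) \<Longrightarrow>
        (\<forall>t\<ge>0. \<forall>x. \<forall>u\<in>Uadm x \<inter> Ucal. norm (\<phi> t x u) \<le> (2 * c * M) * exp (- a * t) * norm x + 2 * c * G (\<eta> (normU u)))"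
    proof (intro allI impI ballI)
      fix M a :: real and G and t :: real and x u
      assume M: "M > 0" and G0: "\<forall>s\<ge>0. G s \<ge> 0" and Gm: "\<forall>s s'. 0 \<le> s \<longrightarrow> s \<le> s' \<longrightarrow> G s \<le> G s'"
        and est: "\<forall>t\<ge>0. \<forall>x. \<forall>u\<in>Uadm x \<inter> Uc. norm (\<phi> t x u) \<le> M * exp (- a * t) * norm x + G (normU u)"
        and t: "t \<ge> 0" and "u \<in> Uadm x \<inter> Ucal"
      then have u: "u \<in> Ucal" by auto
      obtain um up where um: "um \<in> Uc" and up: "up \<in> Uc" and
        h: "normU um \<le> \<eta> (normU u)" "normU up \<le> \<eta> (normU u)"
           "norm (\<phi> t x u) \<le> \<rho> (norm (\<phi> t x um) + norm (\<phi> t x up))"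
        using core[OF t u] by blast
      have gm: "G (normU um) \<le> G (\<eta> (normU u))" using Gm nU um h Uc by auto
      have gp: "G (normU up) \<le> G (\<eta> (normU u))" using Gm nU up h Uc by auto
      have "norm (\<phi> t x um) \<le> M * exp (- a * t) * norm x + G (normU um)"
           "norm (\<phi> t x up) \<le> M * exp (- a * t) * norm x + G (normU up)"
        using est t um up Uc adm by auto
      then have s: "norm (\<phi> t x um) + norm (\<phi> t x up) \<le> 2 * (M * exp (- a * t) * norm x) + 2 * G (\<eta> (normU u))"
        using gm gp by linarith
      have "\<rho> (norm (\<phi> t x um) + norm (\<phi> t x up)) = c * (norm (\<phi> t x um) + norm (\<phi> t x up))"
        using c by simp
      also have "\<dots> \<le> c * (2 * (M * exp (- a * t) * norm x) + 2 * G (\<eta> (normU u)))"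
        using s cpos by (intro mult_left_mono) auto
      finally show "norm (\<phi> t x u) \<le> (2 * c * M) * exp (- a * t) * norm x + 2 * c * G (\<eta> (normU u))"
        using h by (simp add: algebra_simps)
    qed
    have A: "expISS_wrt normU Uadm \<phi> Uc \<Longrightarrow> expISS_wrt normU Uadm \<phi> Ucal"
    proof -
      assume "expISS_wrt normU Uadm \<phi> Uc"
      then obtain M a \<gamma> where M: "M > 0" "a > 0" and g: "class_Kinf \<gamma>" and
        est: "\<forall>t\<ge>0. \<forall>x. \<forall>u\<in>Uadm x \<inter> Uc. norm (\<phi> t x u) \<le> M * exp (- a * t) * norm x + \<gamma> (normU u)"
        unfolding expISS_wrt_def by blast
      have gK: "class_K \<gamma>" using g unfolding class_Kinf_def by auto
      have r: "\<forall>t\<ge>0. \<forall>x. \<forall>u\<in>Uadm x \<inter> Ucal. norm (\<phi> t x u) \<le> (2 * c * M) * exp (- a * t) * norm x + 2 * c * \<gamma> (\<eta> (normU u))"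
      proof -
        have "\<forall>s\<ge>0. \<gamma> s \<ge> 0" using K_nonneg[OF gK] by blast
        moreover have "\<forall>s s'. 0 \<le> s \<longrightarrow> s \<le> s' \<longrightarrow> \<gamma> s \<le> \<gamma> s'" using K_mono[OF gK] by blast
        ultimately show ?thesis using gen[OF M, of \<gamma>] est by blast
      qed
      have "class_Kinf (\<lambda>s. (2 * c) * \<gamma> (\<eta> s))" using Kinf_scale[OF _ Kinf_comp[OF g eta]] cpos by simp
      moreover have "2 * c * M > 0" using cpos M by simp
      ultimately show ?thesis unfolding expISS_wrt_def using r M(2)
        by (intro exI[of _ "2*c*M"] exI[of _ a] exI[of _ "\<lambda>s. (2 * c) * \<gamma> (\<eta> s)"]) auto
    qed
    have B: "expISS_lin_wrt normU Uadm \<phi> Uc \<Longrightarrow> linear_on_Rplus \<eta> \<Longrightarrow> expISS_lin_wrt normU Uadm \<phi> Ucal"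
    proof -
      assume "expISS_lin_wrt normU Uadm \<phi> Uc" "linear_on_Rplus \<eta>"
      then obtain M a g e where M: "M > 0" "a > 0" and g: "g > 0" and
        est: "\<forall>t\<ge>0. \<forall>x. \<forall>u\<in>Uadm x \<inter> Uc. norm (\<phi> t x u) \<le> M * exp (- a * t) * norm x + g * normU u"
        and e: "\<forall>r\<ge>0. \<eta> r = e * r"
        unfolding expISS_lin_wrt_def linear_on_Rplus_def by blast
      have epos: "e > 0"
      proof -
        have sm: "strict_mono_on {0..} \<eta>" using eK unfolding class_K_def by auto
        have "\<eta> 0 < \<eta> 1" using strict_mono_onD[OF sm, of 0 1] by auto
        then show ?thesis using e eK unfolding class_K_def by auto
      qed
      have r: "\<forall>t\<ge>0. \<forall>x. \<forall>u\<in>Uadm x \<inter> Ucal. norm (\<phi> t x u) \<le> (2 * c * M) * exp (- a * t) * norm x + 2 * c * (g * \<eta> (normU u))"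
        using gen[OF M, of "\<lambda>s. g * s"] est g by (auto intro: mult_left_mono)
      have r2: "\<forall>t\<ge>0. \<forall>x. \<forall>u\<in>Uadm x \<inter> Ucal. norm (\<phi> t x u) \<le> (2 * c * M) * exp (- a * t) * norm x + (2 * c * g * e) * normU u"
      proof (intro allI impI ballI)
        fix t :: real and x u assume t: "t \<ge> 0" and u: "u \<in> Uadm x \<inter> Ucal"
        then have "\<eta> (normU u) = e * normU u" using e nU by auto
        then show "norm (\<phi> t x u) \<le> (2 * c * M) * exp (- a * t) * norm x + (2 * c * g * e) * normU u"
        proof -
          have "norm (\<phi> t x u) \<le> (2 * c * M) * exp (- a * t) * norm x + 2 * c * (g * \<eta> (normU u))"
            using r t u by blast
          with \<open>\<eta> (normU u) = e * normU u\<close> show ?thesis by (simp add: algebra_simps)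
        qed
      qed
      show ?thesis unfolding expISS_lin_wrt_def using r2 M cpos g epos
        by (intro exI[of _ "2*c*M"] exI[of _ a] exI[of _ "2*c*g*e"]) auto
    qed
    show ?thesis using A B by blast
  qed
  show ?thesis using ISS ISS2 E2 LIN by blast
qed

end
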